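(* Let $a>0$, $\tau>0$ with $\tau\le a$. Then $\Sigma:=\{\lambda\in\mathbb{C}:\ a\lambda+e^{-\lambda\tau}=0\}\subset\{\lambda\in\mathbb{C}:\ \Re\lambda<0\}$. *)

theory Defs
  imports "HOL-Analysis.Analysis"
begin

end

theory Submission
  imports Defs
begin

theorem lemma3p4:
  fixes a \<tau> :: real
  assumes "a > 0" and "\<tau> > 0" and "\<tau> \<le> a"
  shows "{z::complex. complex_of_real a * z + exp (- z * complex_of_real \<tau>) = 0}
           \<subseteq> {z. Re z < 0}"
proof
  fix z :: complex
  assume "z \<in> {z::complex. complex_of_real a * z + exp (- z * complex_of_real \<tau>) = 0}"
  hence eq: "complex_of_real a * z = - exp (- z * complex_of_real \<tau>)" by (simp add: add_eq_0_iff)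
  have Re1: "a * Re z = - (exp (- Re z * \<tau>) * cos (Im z * \<tau>))"
    using arg_cong[OF eq, of Re] by (simp add: Re_exp)
  have n1: "a * cmod z = exp (- Re z * \<tau>)"
    using arg_cong[OF eq, of norm] assms(1) by (simp add: norm_mult norm_exp_eq_Re)
  show "z \<in> {z. Re z < 0}"
  proof (rule ccontr)
    assume "z \<notin> {z. Re z < 0}"
    hence x: "Re z \<ge> 0" by simp
    have "exp (- Re z * \<tau>) \<le> 1" using x assms(2) by (simp add: mult_nonneg_nonneg)
    hence "a * cmod z \<le> 1" using n1 by simp
    hence "a * \<bar>Im z\<bar> \<le> 1" using abs_Im_le_cmod[of z] assms(1)
      by (meson mult_left_mono less_imp_le order_trans)
    moreover have "\<bar>Im z\<bar> * \<tau> \<le> \<bar>Im z\<bar> * a"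
      using assms(3) by (simp add: mult_left_mono)
    ultimately have "\<bar>Im z\<bar> * \<tau> \<le> 1" by (simp add: mult.commute)
    hence "\<bar>Im z * \<tau>\<bar> < pi/2" using pi_gt3 assms(2) by (simp add: abs_mult)
    hence "cos (Im z * \<tau>) > 0" by (intro cos_gt_zero_pi) auto
    hence "a * Re z < 0" using Re1 by simp
    thus False using x assms(1) by (simp add: mult_less_0_iff)
  qed
qed

end
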